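(* Let $M$ be a nearly finitary matroid on ground set $E$ that is not $n$-nearly finitary for any $n\in\mathbb{N}$, and let $T$ be a set of coloops of $M$. Then the contraction $M/T$ is a nearly finitary matroid that is not $n$-nearly finitary for any $n\in\mathbb{N}$.
   Context: Matroids (possibly infinite): $\emptyset$ independent; subsets of independent sets independent; if $B$ is maximal independent and $A$ non-maximal independent, then $A\cup\{b\}$ is independent for some $b\in B\setminus A$; for independent $A\subseteq X\subseteq E$ there is a maximal independent $S$ with $A\subseteq S\subseteq X$. Bases are maximal independent sets. The dual $M^*$ has as independent sets the subsets of complements of bases of $M$. For $X\subseteq E$, $M|X$ is the restriction (independent sets of $M$ contained in $X$), and the contraction $M/T$ is $(M^*|(E\setminus T))^*$. A coloop of $M$ is an element contained in every base of $M$ (equivalently, in no circuit). The finitarization $M^{\mathrm{fin}}$ has as independent sets those sets all of whose finite subsets are independent in $M$. $M$ is nearly finitary if $F\setminus B$ is finite whenever a base $F$ of $M^{\mathrm{fin}}$ contains a base $B$ of $M$; $n$-nearly finitary if $|F\setminus B|\le n$ for all such pairs. *)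

theory Defs
  imports Main
begin

definition maximal_in :: "'a set set \<Rightarrow> 'a set \<Rightarrow> bool" where
  "maximal_in F S \<longleftrightarrow> S \<in> F \<and> (\<forall>T\<in>F. S \<subseteq> T \<longrightarrow> T = S)"

definition matroid :: "'a set \<Rightarrow> 'a set set \<Rightarrow> bool" where
  "matroid E I \<longleftrightarrow>
     (\<forall>A\<in>I. A \<subseteq> E) \<and>
     {} \<in> I \<and>
     (\<forall>A B. A \<in> I \<longrightarrow> B \<subseteq> A \<longrightarrow> B \<in> I) \<and>
     (\<forall>A B. A \<in> I \<longrightarrow> \<not> maximal_in I A \<longrightarrow> maximal_in I B \<longrightarrow>
        (\<exists>b\<in>B - A. insert b A \<in> I)) \<and>
     (\<forall>A X. A \<in> I \<longrightarrow> A \<subseteq> X \<longrightarrow> X \<subseteq> E \<longrightarrow>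
        (\<exists>S. maximal_in {J\<in>I. J \<subseteq> X} S \<and> A \<subseteq> S))"

definition bases :: "'a set set \<Rightarrow> 'a set set" where
  "bases I = {B. maximal_in I B}"

definition dual_indep :: "'a set \<Rightarrow> 'a set set \<Rightarrow> 'a set set" where
  "dual_indep E I = {A. \<exists>B\<in>bases I. A \<subseteq> E - B}"

definition restrict_indep :: "'a set set \<Rightarrow> 'a set \<Rightarrow> 'a set set" where
  "restrict_indep I X = {A\<in>I. A \<subseteq> X}"

definition contract_indep :: "'a set \<Rightarrow> 'a set set \<Rightarrow> 'a set \<Rightarrow> 'a set set" where
  "contract_indep E I T = dual_indep (E - T) (restrict_indep (dual_indep E I) (E - T))"

definition coloop :: "'a set \<Rightarrow> 'a set set \<Rightarrow> 'a \<Rightarrow> bool" where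
  "coloop E I e \<longleftrightarrow> e \<in> E \<and> (\<forall>B\<in>bases I. e \<in> B)"

definition finitarization :: "'a set \<Rightarrow> 'a set set \<Rightarrow> 'a set set" where
  "finitarization E I = {A. A \<subseteq> E \<and> (\<forall>F. F \<subseteq> A \<longrightarrow> finite F \<longrightarrow> F \<in> I)}"

definition nearly_finitary :: "'a set \<Rightarrow> 'a set set \<Rightarrow> bool" where
  "nearly_finitary E I \<longleftrightarrow>
     (\<forall>F B. F \<in> bases (finitarization E I) \<longrightarrow> B \<in> bases I \<longrightarrow> B \<subseteq> F \<longrightarrow> finite (F - B))"

definition n_nearly_finitary :: "nat \<Rightarrow> 'a set \<Rightarrow> 'a set set \<Rightarrow> bool" where
  "n_nearly_finitary n E I \<longleftrightarrow>
     (\<forall>F B. F \<in> bases (finitarization E I) \<longrightarrow> B \<in> bases I \<longrightarrow> B \<subseteq> F \<longrightarrow>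
        finite (F - B) \<and> card (F - B) \<le> n)"

end

theory Submission
  imports Defs
begin

lemma m_sub: "matroid E I \<Longrightarrow> A \<in> I \<Longrightarrow> A \<subseteq> E"
  unfolding matroid_def by (drule conjunct1) blast

lemma m_down: "matroid E I \<Longrightarrow> A \<in> I \<Longrightarrow> B \<subseteq> A \<Longrightarrow> B \<in> I"
  unfolding matroid_def by (drule conjunct2, drule conjunct2, drule conjunct1) blast

lemma m_empty: "matroid E I \<Longrightarrow> {} \<in> I"
  unfolding matroid_def by (drule conjunct2, drule conjunct1) assumption

lemma m_aug: "matroid E I \<Longrightarrow> A \<in> I \<Longrightarrow> \<not> maximal_in I A \<Longrightarrow> maximal_in I B \<Longrightarrow>
        (\<exists>b\<in>B - A. insert b A \<in> I)"
  unfolding matroid_def by (drule conjunct2, drule conjunct2, drule conjunct2, drule conjunct1) blast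

lemma m_maxex: "matroid E I \<Longrightarrow> A \<in> I \<Longrightarrow> A \<subseteq> X \<Longrightarrow> X \<subseteq> E \<Longrightarrow>
        (\<exists>S. maximal_in {J\<in>I. J \<subseteq> X} S \<and> A \<subseteq> S)"
  unfolding matroid_def by (drule conjunct2, drule conjunct2, drule conjunct2, drule conjunct2) blast

lemma m_ext: "matroid E I \<Longrightarrow> A \<in> I \<Longrightarrow> \<exists>B\<in>bases I. A \<subseteq> B"
proof -
  assume m: "matroid E I" and a: "A \<in> I"
  have "A \<subseteq> E" using m a by (rule m_sub)
  then obtain S where S: "maximal_in {J\<in>I. J \<subseteq> E} S" "A \<subseteq> S"
    using m_maxex[OF m a] by blast
  have "{J\<in>I. J \<subseteq> E} = I" using m m_sub by blast
  then show ?thesis using S unfolding bases_def by auto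
qed

lemma bases_in: "B \<in> bases I \<Longrightarrow> B \<in> I"
  unfolding bases_def maximal_in_def by auto

lemma bases_max: "B \<in> bases I \<Longrightarrow> B \<subseteq> C \<Longrightarrow> C \<in> I \<Longrightarrow> C = B"
  unfolding bases_def maximal_in_def by auto

lemma T_in_bases: "\<forall>t\<in>T. coloop E I t \<Longrightarrow> B \<in> bases I \<Longrightarrow> T \<subseteq> B"
  unfolding coloop_def by blast

lemma T_sub: "\<forall>t\<in>T. coloop E I t \<Longrightarrow> T \<subseteq> E"
  unfolding coloop_def by blast

lemma add_T:
  assumes m: "matroid E I" and c: "\<forall>t\<in>T. coloop E I t" and a: "A \<in> I"
  shows "A \<union> T \<in> I"
proof -
  obtain B where "B \<in> bases I" "A \<subseteq> B" using m_ext[OF m a] by blast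
  then show ?thesis using T_in_bases[OF c] bases_in m_down[OF m] by (metis Un_least)
qed

lemma contract_eq:
  assumes m: "matroid E I" and c: "\<forall>t\<in>T. coloop E I t"
  shows "contract_indep E I T = {A\<in>I. A \<inter> T = {}}"
proof -
  let ?D = "dual_indep E I"
  have r: "restrict_indep ?D (E - T) = ?D"
    unfolding restrict_indep_def dual_indep_def using T_in_bases[OF c] by blast
  have bd: "bases ?D = {E - B | B. B \<in> bases I}"
  proof (rule set_eqI, rule iffI)
    fix S assume "S \<in> bases ?D"
    hence S: "S \<in> ?D" "\<And>U. U \<in> ?D \<Longrightarrow> S \<subseteq> U \<Longrightarrow> U = S"
      unfolding bases_def maximal_in_def by auto
    then obtain B where B: "B \<in> bases I" "S \<subseteq> E - B" unfolding dual_indep_def by blast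
    have "E - B \<in> ?D" using B unfolding dual_indep_def by blast
    hence "E - B = S" using S B by blast
    thus "S \<in> {E - B | B. B \<in> bases I}" using B by blast
  next
    fix S assume "S \<in> {E - B | B. B \<in> bases I}"
    then obtain B where B: "B \<in> bases I" "S = E - B" by blast
    have "S \<in> ?D" using B unfolding dual_indep_def by blast
    moreover have "U = S" if U: "U \<in> ?D" "S \<subseteq> U" for U
    proof -
      obtain B' where B': "B' \<in> bases I" "U \<subseteq> E - B'" using U unfolding dual_indep_def by blast
      have "B' \<subseteq> E" "B \<subseteq> E" using B B' bases_in m_sub[OF m] by blast+
      hence "B' \<subseteq> B" using B B' U by blast
      hence "B = B'" using bases_max[OF B'(1)] bases_in[OF B(1)] by blast
      thus ?thesis using B B' U by blast
    qed
    ultimately show "S \<in> bases ?D" unfolding bases_def maximal_in_def by blast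
  qed
  have "contract_indep E I T = {A. \<exists>B\<in>bases I. A \<subseteq> B - T}"
  proof -
    have "contract_indep E I T = {A. \<exists>C\<in>bases ?D. A \<subseteq> (E - T) - C}"
      unfolding contract_indep_def r by (simp add: dual_indep_def)
    also have "\<dots> = {A. \<exists>B\<in>bases I. A \<subseteq> (E - T) - (E - B)}" unfolding bd by auto
    also have "\<dots> = {A. \<exists>B\<in>bases I. A \<subseteq> B - T}"
    proof -
      have "\<And>B. B \<in> bases I \<Longrightarrow> (E - T) - (E - B) = B - T"
        using bases_in m_sub[OF m] by blast
      thus ?thesis by (metis (no_types, lifting))
    qed
    finally show ?thesis .
  qed
  also have "\<dots> = {A\<in>I. A \<inter> T = {}}"
  proof (rule set_eqI, rule iffI)
    fix A assume "A \<in> {A. \<exists>B\<in>bases I. A \<subseteq> B - T}"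
    then obtain B where "B \<in> bases I" "A \<subseteq> B - T" by blast
    thus "A \<in> {A\<in>I. A \<inter> T = {}}" using bases_in m_down[OF m] by blast
  next
    fix A assume "A \<in> {A\<in>I. A \<inter> T = {}}"
    then obtain B where "B \<in> bases I" "A \<subseteq> B" "A \<inter> T = {}" using m_ext[OF m] by blast
    thus "A \<in> {A. \<exists>B\<in>bases I. A \<subseteq> B - T}" by blast
  qed
  finally show ?thesis .
qed


lemma bases_J:
  assumes m: "matroid E I" and c: "\<forall>t\<in>T. coloop E I t"
  shows "B' \<in> bases {A\<in>I. A \<inter> T = {}} \<longleftrightarrow> (\<exists>B\<in>bases I. B' = B - T)"
proof
  assume h: "B' \<in> bases {A\<in>I. A \<inter> T = {}}"
  hence b: "B' \<in> I" "B' \<inter> T = {}" using bases_in by blast+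
  obtain B where B: "B \<in> bases I" "B' \<subseteq> B" using m_ext[OF m b(1)] by blast
  have "B - T \<in> {A\<in>I. A \<inter> T = {}}" using B bases_in m_down[OF m] by blast
  moreover have "B' \<subseteq> B - T" using B b by blast
  ultimately have "B - T = B'" using bases_max[OF h] by blast
  thus "\<exists>B\<in>bases I. B' = B - T" using B by blast
next
  assume "\<exists>B\<in>bases I. B' = B - T"
  then obtain B where B: "B \<in> bases I" "B' = B - T" by blast
  have TB: "T \<subseteq> B" using T_in_bases[OF c B(1)] .
  have in1: "B' \<in> {A\<in>I. A \<inter> T = {}}" using B bases_in m_down[OF m] by blast
  moreover have "U = B'" if U: "U \<in> {A\<in>I. A \<inter> T = {}}" "B' \<subseteq> U" for U
  proof -
    have "U \<union> T \<in> I" using add_T[OF m c] U by blast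
    moreover have "B \<subseteq> U \<union> T" using B U TB by blast
    ultimately have "U \<union> T = B" using bases_max[OF B(1)] by blast
    thus ?thesis using U B by blast
  qed
  ultimately show "B' \<in> bases {A\<in>I. A \<inter> T = {}}" unfolding bases_def maximal_in_def by blast
qed

lemma matroid_J:
  assumes m: "matroid E I" and c: "\<forall>t\<in>T. coloop E I t"
  shows "matroid (E - T) {A\<in>I. A \<inter> T = {}}"
  unfolding matroid_def
proof (intro conjI allI impI ballI)
  show "A \<subseteq> E - T" if "A \<in> {A\<in>I. A \<inter> T = {}}" for A using that m_sub[OF m] by blast
  show "{} \<in> {A\<in>I. A \<inter> T = {}}" using m_empty[OF m] by blast
  show "B \<in> {A\<in>I. A \<inter> T = {}}" if "A \<in> {A\<in>I. A \<inter> T = {}}" "B \<subseteq> A" for A B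
    using that m_down[OF m] by blast
next
  fix A B
  assume A: "A \<in> {A\<in>I. A \<inter> T = {}}" and nm: "\<not> maximal_in {A\<in>I. A \<inter> T = {}} A"
    and mB: "maximal_in {A\<in>I. A \<inter> T = {}} B"
  obtain B0 where B0: "B0 \<in> bases I" "B = B0 - T" using mB bases_J[OF m c] unfolding bases_def by blast
  have AT: "A \<union> T \<in> I" using add_T[OF m c] A by blast
  have "\<not> maximal_in I (A \<union> T)"
  proof
    assume "maximal_in I (A \<union> T)"
    hence "A \<union> T \<in> bases I" unfolding bases_def by blast
    hence "A \<in> bases {A\<in>I. A \<inter> T = {}}" using bases_J[OF m c] A by blast
    thus False using nm unfolding bases_def by blast
  qed
  then obtain b where b: "b \<in> B0 - (A \<union> T)" "insert b (A \<union> T) \<in> I"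
    using m_aug[OF m AT] B0 unfolding bases_def by blast
  have "insert b A \<in> I" using b m_down[OF m] by blast
  thus "\<exists>b\<in>B - A. insert b A \<in> {A\<in>I. A \<inter> T = {}}" using b B0 A by blast
next
  fix A X
  assume A: "A \<in> {A\<in>I. A \<inter> T = {}}" and AX: "A \<subseteq> X" and XE: "X \<subseteq> E - T"
  obtain S where S: "maximal_in {J\<in>I. J \<subseteq> X} S" "A \<subseteq> S"
    using m_maxex[OF m _ AX] A XE by blast
  have "{J\<in>{A\<in>I. A \<inter> T = {}}. J \<subseteq> X} = {J\<in>I. J \<subseteq> X}" using XE by blast
  thus "\<exists>S. maximal_in {J\<in>{A\<in>I. A \<inter> T = {}}. J \<subseteq> X} S \<and> A \<subseteq> S" using S by auto
qed

lemma fin_J: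
  "finitarization (E - T) {A\<in>I. A \<inter> T = {}} = {A\<in>finitarization E I. A \<inter> T = {}}"
  unfolding finitarization_def by blast

lemma add_T_fin:
  assumes m: "matroid E I" and c: "\<forall>t\<in>T. coloop E I t" and F: "F \<in> finitarization E I"
  shows "F \<union> T \<in> finitarization E I"
  unfolding finitarization_def
proof (intro CollectI conjI allI impI)
  show "F \<union> T \<subseteq> E" using F T_sub[OF c] unfolding finitarization_def by blast
  fix G assume G: "G \<subseteq> F \<union> T" "finite G"
  have "G - T \<in> I" using F G unfolding finitarization_def by blast
  hence "(G - T) \<union> T \<in> I" using add_T[OF m c] by blast
  thus "G \<in> I" using m_down[OF m] by blast
qed

lemma bases_finJ1:
  assumes m: "matroid E I" and c: "\<forall>t\<in>T. coloop E I t"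
    and F: "F \<in> bases {A\<in>finitarization E I. A \<inter> T = {}}"
  shows "F \<union> T \<in> bases (finitarization E I)"
proof -
  have F1: "F \<in> finitarization E I" "F \<inter> T = {}" using F bases_in by blast+
  have "F \<union> T \<in> finitarization E I" using add_T_fin[OF m c F1(1)] .
  moreover have "H = F \<union> T" if H: "H \<in> finitarization E I" "F \<union> T \<subseteq> H" for H
  proof -
    have "H - T \<in> finitarization E I" using H unfolding finitarization_def by blast
    hence "H - T = F" using bases_max[OF F, of "H - T"] H F1 by blast
    thus ?thesis using H by blast
  qed
  ultimately show ?thesis unfolding bases_def maximal_in_def by blast
qed

lemma bases_finJ2:
  assumes m: "matroid E I" and c: "\<forall>t\<in>T. coloop E I t"
    and F: "F \<in> bases (finitarization E I)" and TF: "T \<subseteq> F"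
  shows "F - T \<in> bases {A\<in>finitarization E I. A \<inter> T = {}}"
proof -
  have F1: "F \<in> finitarization E I" using F bases_in by blast
  have "F - T \<in> {A\<in>finitarization E I. A \<inter> T = {}}"
    using F1 unfolding finitarization_def by blast
  moreover have "H = F - T" if H: "H \<in> {A\<in>finitarization E I. A \<inter> T = {}}" "F - T \<subseteq> H" for H
  proof -
    have "H \<union> T \<in> finitarization E I" using add_T_fin[OF m c] H by blast
    hence "H \<union> T = F" using bases_max[OF F, of "H \<union> T"] H TF by blast
    thus ?thesis using H by blast
  qed
  ultimately show ?thesis unfolding bases_def maximal_in_def by blast
qed

theorem theorem3p4p8:
  fixes E T :: "'a set" and I :: "'a set set"
  assumes "matroid E I"
    and "nearly_finitary E I"
    and "\<forall>n. \<not> n_nearly_finitary n E I"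
    and "\<forall>t\<in>T. coloop E I t"
  shows "matroid (E - T) (contract_indep E I T)
    \<and> nearly_finitary (E - T) (contract_indep E I T)
    \<and> (\<forall>n. \<not> n_nearly_finitary n (E - T) (contract_indep E I T))"
proof -
  note m = assms(1) and c = assms(4)
  have ce: "contract_indep E I T = {A\<in>I. A \<inter> T = {}}" using contract_eq[OF m c] .
  have 1: "matroid (E - T) (contract_indep E I T)" unfolding ce using matroid_J[OF m c] .
  have 2: "nearly_finitary (E - T) (contract_indep E I T)"
    unfolding nearly_finitary_def ce fin_J
  proof (intro allI impI)
    fix F B' assume F: "F \<in> bases {A\<in>finitarization E I. A \<inter> T = {}}"
      and B': "B' \<in> bases {A\<in>I. A \<inter> T = {}}" and sub: "B' \<subseteq> F"
    obtain B where B: "B \<in> bases I" "B' = B - T" using B' bases_J[OF m c] by blast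
    have TB: "T \<subseteq> B" using T_in_bases[OF c B(1)] .
    have FT: "F \<union> T \<in> bases (finitarization E I)" using bases_finJ1[OF m c F] .
    have FT0: "F \<inter> T = {}" using F bases_in by blast
    have "B \<subseteq> F \<union> T" using B sub by blast
    hence "finite ((F \<union> T) - B)" using assms(2) FT B(1) unfolding nearly_finitary_def by blast
    moreover have "(F \<union> T) - B = F - B'" using B TB \<open>F \<inter> T = {}\<close> by blast
    ultimately show "finite (F - B')" by simp
  qed
  have 3: "\<not> n_nearly_finitary n (E - T) (contract_indep E I T)" for n
  proof -
    obtain F B where F: "F \<in> bases (finitarization E I)" and B: "B \<in> bases I" and sub: "B \<subseteq> F"
      and bad: "\<not> (finite (F - B) \<and> card (F - B) \<le> n)"
      using assms(3) unfolding n_nearly_finitary_def by blast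
    have TB: "T \<subseteq> B" using T_in_bases[OF c B] .
    have F': "F - T \<in> bases {A\<in>finitarization E I. A \<inter> T = {}}"
      using bases_finJ2[OF m c F] TB sub by blast
    have B': "B - T \<in> bases {A\<in>I. A \<inter> T = {}}" using bases_J[OF m c] B by blast
    have eq: "(F - T) - (B - T) = F - B" using TB by blast
    have sub': "B - T \<subseteq> F - T" using sub by blast
    show ?thesis unfolding n_nearly_finitary_def ce fin_J
    proof
      assume h: "\<forall>F B. F \<in> bases {A\<in>finitarization E I. A \<inter> T = {}} \<longrightarrow>
        B \<in> bases {A\<in>I. A \<inter> T = {}} \<longrightarrow> B \<subseteq> F \<longrightarrow> finite (F - B) \<and> card (F - B) \<le> n"
      have "finite ((F - T) - (B - T)) \<and> card ((F - T) - (B - T)) \<le> n"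
        using h[rule_format, OF F' B' sub'] .
      thus False using eq bad by simp
    qed
  qed
  show ?thesis using 1 2 3 by blast
qed

end
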